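(* Let $Y$ be a Young diagram with row lengths $a_1\ge\cdots\ge a_m\ge0$, let $P$ be a 2-cover of $H(Y)$, and let $Q=P\cap(C\times S)$. Then $$|P|\ge |Q|+\sum_{i=1}^m\nu(a_i,Q).$$
   Context: $H(Y)$ is the hypergraph with vertex sides $R=\{r_1,\dots,r_m\}$, $C=\{c_1,\dots,c_{a_1}\}$, $S=\{s_1,\dots,s_{a_1}\}$ and edges $\{r_i,c_j,s_k\}$ for $1\le i\le m$, $1\le j,k\le a_i$. For disjoint sets $A,B$, $A\times B$ is the set of pairs $\{a,b\}$ with $a\in A,b\in B$. A 2-cover of $H(Y)$ is a set of 2-element vertex sets such that every edge of $H(Y)$ contains a member of it. $\nu(\ell,Q)$ is the matching number of the bipartite graph with sides $\{c_1,\dots,c_\ell\}$, $\{s_1,\dots,s_\ell\}$ and edges $\{c_js_k:1\le j,k\le\ell\}\setminus Q$. *)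

theory Defs
  imports Main
begin

datatype vert = Rv nat | Cv nat | Sv nat

definition col_len :: "nat \<Rightarrow> (nat \<Rightarrow> nat) \<Rightarrow> nat" where
  "col_len m a = (if m = 0 then 0 else a 1)"

definition Rset :: "nat \<Rightarrow> vert set" where
  "Rset m = Rv ` {1..m}"
definition Cset :: "nat \<Rightarrow> (nat \<Rightarrow> nat) \<Rightarrow> vert set" where
  "Cset m a = Cv ` {1..col_len m a}"
definition Sset :: "nat \<Rightarrow> (nat \<Rightarrow> nat) \<Rightarrow> vert set" where
  "Sset m a = Sv ` {1..col_len m a}"

definition HV :: "nat \<Rightarrow> (nat \<Rightarrow> nat) \<Rightarrow> vert set" where
  "HV m a = Rset m \<union> Cset m a \<union> Sset m a"

definition HE :: "nat \<Rightarrow> (nat \<Rightarrow> nat) \<Rightarrow> vert set set" where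
  "HE m a = {{Rv i, Cv j, Sv k} | i j k. 1 \<le> i \<and> i \<le> m \<and> 1 \<le> j \<and> j \<le> a i \<and> 1 \<le> k \<and> k \<le> a i}"

text \<open>A \<times> B for disjoint vertex sets: the set of pairs {a,b}.\<close>
definition pairs_between :: "'v set \<Rightarrow> 'v set \<Rightarrow> 'v set set" where
  "pairs_between A B = {{x, y} | x y. x \<in> A \<and> y \<in> B}"

definition is_2cover :: "nat \<Rightarrow> (nat \<Rightarrow> nat) \<Rightarrow> vert set set \<Rightarrow> bool" where
  "is_2cover m a P \<longleftrightarrow> (\<forall>p\<in>P. p \<subseteq> HV m a \<and> card p = 2) \<and> (\<forall>e\<in>HE m a. \<exists>p\<in>P. p \<subseteq> e)"

definition bip_edges :: "nat \<Rightarrow> vert set set \<Rightarrow> vert set set" where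
  "bip_edges l Q = {{Cv j, Sv k} | j k. 1 \<le> j \<and> j \<le> l \<and> 1 \<le> k \<and> k \<le> l} - Q"

definition is_matching :: "'v set set \<Rightarrow> bool" where
  "is_matching M \<longleftrightarrow> (\<forall>e\<in>M. \<forall>e'\<in>M. e \<noteq> e' \<longrightarrow> e \<inter> e' = {})"

text \<open>nu l Q: matching number of K_{l,l} on c_1..c_l, s_1..s_l with the edges in Q removed.\<close>
definition nu :: "nat \<Rightarrow> vert set set \<Rightarrow> nat" where
  "nu l Q = Max {card M | M. M \<subseteq> bip_edges l Q \<and> is_matching M}"

end

theory Submission
  imports Defs
begin

lemma finite_bip: "finite (bip_edges l Q)"
proof -
  have "bip_edges l Q \<subseteq> (\<lambda>(j,k). {Cv j, Sv k}) ` ({1..l}\<times>{1..l})"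
    unfolding bip_edges_def by auto
  then show ?thesis by (rule finite_subset) auto
qed

lemma nu_witness: "\<exists>M. M \<subseteq> bip_edges l Q \<and> is_matching M \<and> card M = nu l Q"
proof -
  let ?S = "{card M | M. M \<subseteq> bip_edges l Q \<and> is_matching M}"
  have "?S \<subseteq> card ` Pow (bip_edges l Q)" by auto
  hence fin: "finite ?S" using finite_bip by (meson finite_Pow_iff finite_imageI finite_subset)
  have "0 \<in> ?S" unfolding is_matching_def by force
  hence "Max ?S \<in> ?S" using fin by (intro Max_in) auto
  thus ?thesis unfolding nu_def by auto
qed

lemma finite_HV: "finite (HV m a)"
  unfolding HV_def Rset_def Cset_def Sset_def by auto

lemma finite_P: assumes "is_2cover m a P" shows "finite P"
proof -
  have "P \<subseteq> Pow (HV m a)" using assms unfolding is_2cover_def by auto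
  thus ?thesis using finite_HV by (meson finite_Pow_iff finite_subset)
qed

definition Rrow :: "vert set set \<Rightarrow> nat \<Rightarrow> vert set set" where
  "Rrow P i = {p \<in> P. Rv i \<in> p \<and> (\<exists>j. Cv j \<in> p \<or> Sv j \<in> p)}"

lemma row_bound:
  assumes cover: "is_2cover m a P" and i: "1 \<le> i" "i \<le> m" and ai: "a i \<le> col_len m a"
  shows "nu (a i) (P \<inter> pairs_between (Cset m a) (Sset m a)) \<le> card (Rrow P i)"
proof -
  let ?Q = "P \<inter> pairs_between (Cset m a) (Sset m a)"
  obtain M where M: "M \<subseteq> bip_edges (a i) ?Q" "is_matching M" "card M = nu (a i) ?Q"
    using nu_witness by blast
  have key: "\<exists>p. p \<in> Rrow P i \<and> p \<subseteq> insert (Rv i) e" if e: "e \<in> M" for e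
  proof -
    obtain j k where jk: "e = {Cv j, Sv k}" "1 \<le> j" "j \<le> a i" "1 \<le> k" "k \<le> a i" "e \<notin> ?Q"
      using e M(1) unfolding bip_edges_def by blast
    have "{Rv i, Cv j, Sv k} \<in> HE m a" unfolding HE_def using i jk by blast
    then obtain p where p: "p \<in> P" "p \<subseteq> {Rv i, Cv j, Sv k}"
      using cover unfolding is_2cover_def by blast
    have cp: "card p = 2" using p cover unfolding is_2cover_def by auto
    have "e \<in> pairs_between (Cset m a) (Sset m a)"
    proof -
      have "Cv j \<in> Cset m a" "Sv k \<in> Sset m a" unfolding Cset_def Sset_def using jk ai by auto
      thus ?thesis unfolding pairs_between_def jk(1) by blast
    qed
    hence eP: "e \<notin> P" using jk by auto
    have ce: "card e = 2" using jk by auto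
    have ri: "Rv i \<in> p"
    proof (rule ccontr)
      assume "Rv i \<notin> p"
      hence "p \<subseteq> e" using p jk by auto
      hence "p = e" using cp ce by (intro card_subset_eq) (auto simp: jk(1))
      thus False using p eP by simp
    qed
    have "\<exists>x. x \<in> p \<and> x \<noteq> Rv i"
    proof (rule ccontr)
      assume "\<not> ?thesis"
      hence "p \<subseteq> {Rv i}" by auto
      hence "card p \<le> card {Rv i}" by (intro card_mono) auto
      hence "card p \<le> 1" by simp
      thus False using cp by simp
    qed
    then obtain x where "x \<in> p" "x \<noteq> Rv i" by blast
    hence "Cv j \<in> p \<or> Sv k \<in> p" using p by auto
    hence "p \<in> Rrow P i" unfolding Rrow_def using p ri by blast
    moreover have "p \<subseteq> insert (Rv i) e" using p jk by auto
    ultimately show ?thesis by blast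
  qed
  define g where "g e = (SOME p. p \<in> Rrow P i \<and> p \<subseteq> insert (Rv i) e)" for e
  have g: "g e \<in> Rrow P i \<and> g e \<subseteq> insert (Rv i) e" if "e \<in> M" for e
    unfolding g_def using someI_ex[OF key[OF that]] .
  have "inj_on g M"
  proof
    fix e e' assume ee: "e \<in> M" "e' \<in> M" "g e = g e'"
    show "e = e'"
    proof (rule ccontr)
      assume ne: "e \<noteq> e'"
      hence "e \<inter> e' = {}" using M(2) ee unfolding is_matching_def by blast
      hence sub: "g e \<subseteq> {Rv i}" using g[OF ee(1)] g[OF ee(2)] ee(3) by auto
      have "card (g e) = 2" using g[OF ee(1)] cover unfolding Rrow_def is_2cover_def by auto
      moreover have "card (g e) \<le> card {Rv i}" using sub by (intro card_mono) auto
      hence "card (g e) \<le> 1" by simp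
      ultimately show False by simp
    qed
  qed
  moreover have "g ` M \<subseteq> Rrow P i" using g by auto
  moreover have "finite (Rrow P i)" using finite_P[OF cover] unfolding Rrow_def by auto
  ultimately have "card M \<le> card (Rrow P i)" by (metis card_inj_on_le)
  thus ?thesis using M(3) by simp
qed

theorem corollary2:
  fixes m :: nat and a :: "nat \<Rightarrow> nat" and P :: "vert set set"
  assumes young: "\<And>i j. 1 \<le> i \<Longrightarrow> i \<le> j \<Longrightarrow> j \<le> m \<Longrightarrow> a j \<le> a i"
    and cover: "is_2cover m a P"
  shows "card P \<ge> card (P \<inter> pairs_between (Cset m a) (Sset m a))
           + (\<Sum>i=1..m. nu (a i) (P \<inter> pairs_between (Cset m a) (Sset m a)))"
proof -
  let ?Q = "P \<inter> pairs_between (Cset m a) (Sset m a)"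
  have finP: "finite P" using finite_P[OF cover] .
  have finR: "\<And>i. finite (Rrow P i)" using finP unfolding Rrow_def by auto
  have disj: "pairwise (\<lambda>i j. Rrow P i \<inter> Rrow P j = {}) {1..m}"
  proof (rule pairwiseI)
    fix i j assume ij: "i \<in> {1..m}" "j \<in> {1..m}" "i \<noteq> j"
    show "Rrow P i \<inter> Rrow P j = {}"
    proof (rule ccontr)
      assume "Rrow P i \<inter> Rrow P j \<noteq> {}"
      then obtain p where p: "p \<in> P" "Rv i \<in> p" "Rv j \<in> p" and x: "\<exists>k. Cv k \<in> p \<or> Sv k \<in> p"
        unfolding Rrow_def by blast
      obtain x where x: "x \<in> p" "x \<noteq> Rv i" "x \<noteq> Rv j" using x by blast
      have "{Rv i, Rv j, x} \<subseteq> p" using p x by auto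
      moreover have cp2: "card p = 2" using p cover unfolding is_2cover_def by auto
      ultimately have "card {Rv i, Rv j, x} \<le> card p"
        by (intro card_mono) (auto intro: card_ge_0_finite)
      moreover have "card {Rv i, Rv j, x} = 3" using ij x by auto
      ultimately show False using cp2 by simp
    qed
  qed
  have cardU: "card (\<Union>i\<in>{1..m}. Rrow P i) = (\<Sum>i=1..m. card (Rrow P i))"
    by (rule card_UN_disjoint) (use finR disj in \<open>auto simp: pairwise_def\<close>)
  have dQ: "?Q \<inter> (\<Union>i\<in>{1..m}. Rrow P i) = {}"
    unfolding Rrow_def pairs_between_def Cset_def Sset_def by auto
  have "?Q \<union> (\<Union>i\<in>{1..m}. Rrow P i) \<subseteq> P" unfolding Rrow_def by auto
  hence "card (?Q \<union> (\<Union>i\<in>{1..m}. Rrow P i)) \<le> card P" using finP by (rule card_mono[rotated])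
  moreover have "card (?Q \<union> (\<Union>i\<in>{1..m}. Rrow P i)) = card ?Q + (\<Sum>i=1..m. card (Rrow P i))"
    using card_Un_disjoint[OF _ _ dQ] finP finR cardU by auto
  moreover have "(\<Sum>i=1..m. nu (a i) ?Q) \<le> (\<Sum>i=1..m. card (Rrow P i))"
  proof (rule sum_mono)
    fix i assume i: "i \<in> {1..m}"
    have "a i \<le> col_len m a" using young[of 1 i] i unfolding col_len_def by auto
    thus "nu (a i) ?Q \<le> card (Rrow P i)" using row_bound[OF cover] i by auto
  qed
  ultimately show ?thesis by linarith
qed

end
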